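(* Let $S$ be a conical category and $a,b\in S$. (1) If $S$ is left cancellative and $\mathrm{s}(a)=\mathrm{s}(b)$, then $\varepsilon_S(a)$ and $\varepsilon_S(b)$ have a left gcd in $\mathrm{U_{mon}}(S)$ iff $a$ and $b$ have a left gcd $a\wedge b$ in $S$, and in that case $\varepsilon_S(a\wedge b)$ is the left gcd of $\varepsilon_S(a),\varepsilon_S(b)$. (2) If $S$ is right cancellative and $\mathrm{t}(a)=\mathrm{t}(b)$, then $\varepsilon_S(a)$ and $\varepsilon_S(b)$ have a right gcd in $\mathrm{U_{mon}}(S)$ iff $a$ and $b$ have a right gcd $a\mathbin{\widetilde\wedge} b$ in $S$, and in that case $\varepsilon_S(a\mathbin{\widetilde\wedge} b)$ is the right gcd of $\varepsilon_S(a),\varepsilon_S(b)$.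
   Context: Categories are arrow-only: a set $S$ with partial associative multiplication, identities $\mathrm{Id}\,S$, source/target identities $\mathrm{s}(x),\mathrm{t}(x)$. $S$ is conical if $xy\in\mathrm{Id}\,S$ implies $x\in\mathrm{Id}\,S$. $\mathrm{U_{mon}}(S)$ is the monoid presented by generators $\varepsilon_S(x)$ ($x\in S$) and relations $\varepsilon_S(e)=1$ ($e\in\mathrm{Id}\,S$), $\varepsilon_S(x)\varepsilon_S(y)=\varepsilon_S(xy)$ whenever $xy$ is defined. In a category or monoid $C$, $a\leqslant_C b$ iff $b=ax$ for some $x$, and $a\mathbin{\widetilde\leqslant}_C b$ iff $b=xa$ for some $x$; a left gcd (resp. right gcd) of a pair is a greatest lower bound with respect to $\leqslant$ (resp. $\mathbin{\widetilde\leqslant}$). *)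

theory Defs
  imports Main
begin

text \<open>An arrow-only category is given by a carrier set S, source and target maps
  s, t (whose values are the identities), and a composition m; the product x y
  is defined exactly when t x = s y.\<close>

definition category :: "'a set \<Rightarrow> ('a \<Rightarrow> 'a) \<Rightarrow> ('a \<Rightarrow> 'a) \<Rightarrow> ('a \<Rightarrow> 'a \<Rightarrow> 'a) \<Rightarrow> bool" where
  "category S s t m \<longleftrightarrow>
     (\<forall>x\<in>S. s x \<in> S \<and> t x \<in> S) \<and>
     (\<forall>x\<in>S. s (s x) = s x \<and> t (s x) = s x \<and> s (t x) = t x \<and> t (t x) = t x) \<and>
     (\<forall>x\<in>S. \<forall>y\<in>S. t x = s y \<longrightarrow> m x y \<in> S \<and> s (m x y) = s x \<and> t (m x y) = t y) \<and>
     (\<forall>x\<in>S. m (s x) x = x \<and> m x (t x) = x) \<and>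
     (\<forall>x\<in>S. \<forall>y\<in>S. \<forall>z\<in>S. t x = s y \<longrightarrow> t y = s z \<longrightarrow> m (m x y) z = m x (m y z))"

definition Ids :: "'a set \<Rightarrow> ('a \<Rightarrow> 'a) \<Rightarrow> 'a set" where
  "Ids S s = {e \<in> S. s e = e}"

definition conical :: "'a set \<Rightarrow> ('a \<Rightarrow> 'a) \<Rightarrow> ('a \<Rightarrow> 'a) \<Rightarrow> ('a \<Rightarrow> 'a \<Rightarrow> 'a) \<Rightarrow> bool" where
  "conical S s t m \<longleftrightarrow>
     (\<forall>x\<in>S. \<forall>y\<in>S. t x = s y \<longrightarrow> m x y \<in> Ids S s \<longrightarrow> x \<in> Ids S s)"

definition left_cancellative :: "'a set \<Rightarrow> ('a \<Rightarrow> 'a) \<Rightarrow> ('a \<Rightarrow> 'a) \<Rightarrow> ('a \<Rightarrow> 'a \<Rightarrow> 'a) \<Rightarrow> bool" where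
  "left_cancellative S s t m \<longleftrightarrow>
     (\<forall>a\<in>S. \<forall>x\<in>S. \<forall>y\<in>S. t a = s x \<longrightarrow> t a = s y \<longrightarrow> m a x = m a y \<longrightarrow> x = y)"

definition right_cancellative :: "'a set \<Rightarrow> ('a \<Rightarrow> 'a) \<Rightarrow> ('a \<Rightarrow> 'a) \<Rightarrow> ('a \<Rightarrow> 'a \<Rightarrow> 'a) \<Rightarrow> bool" where
  "right_cancellative S s t m \<longleftrightarrow>
     (\<forall>a\<in>S. \<forall>x\<in>S. \<forall>y\<in>S. t x = s a \<longrightarrow> t y = s a \<longrightarrow> m x a = m y a \<longrightarrow> x = y)"

definition cat_leq :: "'a set \<Rightarrow> ('a \<Rightarrow> 'a) \<Rightarrow> ('a \<Rightarrow> 'a) \<Rightarrow> ('a \<Rightarrow> 'a \<Rightarrow> 'a) \<Rightarrow> 'a \<Rightarrow> 'a \<Rightarrow> bool" where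
  "cat_leq S s t m a b \<longleftrightarrow> (\<exists>x\<in>S. t a = s x \<and> m a x = b)"

definition cat_rleq :: "'a set \<Rightarrow> ('a \<Rightarrow> 'a) \<Rightarrow> ('a \<Rightarrow> 'a) \<Rightarrow> ('a \<Rightarrow> 'a \<Rightarrow> 'a) \<Rightarrow> 'a \<Rightarrow> 'a \<Rightarrow> bool" where
  "cat_rleq S s t m a b \<longleftrightarrow> (\<exists>x\<in>S. t x = s a \<and> m x a = b)"

definition cat_lgcd :: "'a set \<Rightarrow> ('a \<Rightarrow> 'a) \<Rightarrow> ('a \<Rightarrow> 'a) \<Rightarrow> ('a \<Rightarrow> 'a \<Rightarrow> 'a) \<Rightarrow> 'a \<Rightarrow> 'a \<Rightarrow> 'a \<Rightarrow> bool" where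
  "cat_lgcd S s t m a b c \<longleftrightarrow> c \<in> S \<and> cat_leq S s t m c a \<and> cat_leq S s t m c b \<and>
     (\<forall>d\<in>S. cat_leq S s t m d a \<and> cat_leq S s t m d b \<longrightarrow> cat_leq S s t m d c)"

definition cat_rgcd :: "'a set \<Rightarrow> ('a \<Rightarrow> 'a) \<Rightarrow> ('a \<Rightarrow> 'a) \<Rightarrow> ('a \<Rightarrow> 'a \<Rightarrow> 'a) \<Rightarrow> 'a \<Rightarrow> 'a \<Rightarrow> 'a \<Rightarrow> bool" where
  "cat_rgcd S s t m a b c \<longleftrightarrow> c \<in> S \<and> cat_rleq S s t m c a \<and> cat_rleq S s t m c b \<and>
     (\<forall>d\<in>S. cat_rleq S s t m d a \<and> cat_rleq S s t m d b \<longrightarrow> cat_rleq S s t m d c)"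

text \<open>The monoid U_mon(S): elements are words over S (the word [x] represents
  eps_S(x), concatenation is the product, [] is 1) modulo the congruence generated by
  eps(e) = 1 for identities e and eps(x) eps(y) = eps(xy) when xy is defined.\<close>

inductive umon_eq :: "'a set \<Rightarrow> ('a \<Rightarrow> 'a) \<Rightarrow> ('a \<Rightarrow> 'a) \<Rightarrow> ('a \<Rightarrow> 'a \<Rightarrow> 'a) \<Rightarrow> 'a list \<Rightarrow> 'a list \<Rightarrow> bool"
  for S s t m where
  refl: "set w \<subseteq> S \<Longrightarrow> umon_eq S s t m w w"
| sym: "umon_eq S s t m u v \<Longrightarrow> umon_eq S s t m v u"
| trans: "umon_eq S s t m u v \<Longrightarrow> umon_eq S s t m v w \<Longrightarrow> umon_eq S s t m u w"
| ident: "set u \<subseteq> S \<Longrightarrow> set v \<subseteq> S \<Longrightarrow> e \<in> Ids S s \<Longrightarrow> umon_eq S s t m (u @ [e] @ v) (u @ v)"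
| mult: "set u \<subseteq> S \<Longrightarrow> set v \<subseteq> S \<Longrightarrow> x \<in> S \<Longrightarrow> y \<in> S \<Longrightarrow> t x = s y \<Longrightarrow>
         umon_eq S s t m (u @ [x, y] @ v) (u @ [m x y] @ v)"

definition umon_leq :: "'a set \<Rightarrow> ('a \<Rightarrow> 'a) \<Rightarrow> ('a \<Rightarrow> 'a) \<Rightarrow> ('a \<Rightarrow> 'a \<Rightarrow> 'a) \<Rightarrow> 'a list \<Rightarrow> 'a list \<Rightarrow> bool" where
  "umon_leq S s t m u v \<longleftrightarrow> (\<exists>w. set w \<subseteq> S \<and> umon_eq S s t m (u @ w) v)"

definition umon_rleq :: "'a set \<Rightarrow> ('a \<Rightarrow> 'a) \<Rightarrow> ('a \<Rightarrow> 'a) \<Rightarrow> ('a \<Rightarrow> 'a \<Rightarrow> 'a) \<Rightarrow> 'a list \<Rightarrow> 'a list \<Rightarrow> bool" where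
  "umon_rleq S s t m u v \<longleftrightarrow> (\<exists>w. set w \<subseteq> S \<and> umon_eq S s t m (w @ u) v)"

definition umon_lgcd :: "'a set \<Rightarrow> ('a \<Rightarrow> 'a) \<Rightarrow> ('a \<Rightarrow> 'a) \<Rightarrow> ('a \<Rightarrow> 'a \<Rightarrow> 'a) \<Rightarrow> 'a list \<Rightarrow> 'a list \<Rightarrow> 'a list \<Rightarrow> bool" where
  "umon_lgcd S s t m u v c \<longleftrightarrow> set c \<subseteq> S \<and> umon_leq S s t m c u \<and> umon_leq S s t m c v \<and>
     (\<forall>d. set d \<subseteq> S \<and> umon_leq S s t m d u \<and> umon_leq S s t m d v \<longrightarrow> umon_leq S s t m d c)"

definition umon_rgcd :: "'a set \<Rightarrow> ('a \<Rightarrow> 'a) \<Rightarrow> ('a \<Rightarrow> 'a) \<Rightarrow> ('a \<Rightarrow> 'a \<Rightarrow> 'a) \<Rightarrow> 'a list \<Rightarrow> 'a list \<Rightarrow> 'a list \<Rightarrow> bool" where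
  "umon_rgcd S s t m u v c \<longleftrightarrow> set c \<subseteq> S \<and> umon_rleq S s t m c u \<and> umon_rleq S s t m c v \<and>
     (\<forall>d. set d \<subseteq> S \<and> umon_rleq S s t m d u \<and> umon_rleq S s t m d v \<longrightarrow> umon_rleq S s t m d c)"

end

theory Submission
  imports Defs
begin

locale cc =
  fixes S :: "'a set" and s t :: "'a \<Rightarrow> 'a" and m :: "'a \<Rightarrow> 'a \<Rightarrow> 'a"
  assumes cat: "category S s t m" and con: "conical S s t m"
begin

lemma sS: "x \<in> S \<Longrightarrow> s x \<in> S" using cat unfolding category_def by blast
lemma tS: "x \<in> S \<Longrightarrow> t x \<in> S" using cat unfolding category_def by blast
lemma ss[simp]: "x \<in> S \<Longrightarrow> s (s x) = s x" using cat unfolding category_def by blast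
lemma ts[simp]: "x \<in> S \<Longrightarrow> t (s x) = s x" using cat unfolding category_def by blast
lemma st[simp]: "x \<in> S \<Longrightarrow> s (t x) = t x" using cat unfolding category_def by blast
lemma tt[simp]: "x \<in> S \<Longrightarrow> t (t x) = t x" using cat unfolding category_def by blast
lemma mS: "x \<in> S \<Longrightarrow> y \<in> S \<Longrightarrow> t x = s y \<Longrightarrow> m x y \<in> S" using cat unfolding category_def by blast
lemma s_m[simp]: "x \<in> S \<Longrightarrow> y \<in> S \<Longrightarrow> t x = s y \<Longrightarrow> s (m x y) = s x" using cat unfolding category_def by blast
lemma t_m[simp]: "x \<in> S \<Longrightarrow> y \<in> S \<Longrightarrow> t x = s y \<Longrightarrow> t (m x y) = t y" using cat unfolding category_def by blast
lemma lid[simp]: "x \<in> S \<Longrightarrow> m (s x) x = x" using cat unfolding category_def by blast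
lemma rid[simp]: "x \<in> S \<Longrightarrow> m x (t x) = x" using cat unfolding category_def by blast
lemma assoc: "x \<in> S \<Longrightarrow> y \<in> S \<Longrightarrow> z \<in> S \<Longrightarrow> t x = s y \<Longrightarrow> t y = s z \<Longrightarrow> m (m x y) z = m x (m y z)"
  using cat unfolding category_def by blast

lemma id_t: "x \<in> S \<Longrightarrow> s x = x \<Longrightarrow> t x = x" by (metis ts)
lemma id_s: "x \<in> S \<Longrightarrow> t x = x \<Longrightarrow> s x = x" by (metis st)

lemma con1: "x \<in> S \<Longrightarrow> y \<in> S \<Longrightarrow> t x = s y \<Longrightarrow> s (m x y) = m x y \<Longrightarrow> s x = x"
  using con mS unfolding conical_def Ids_def by blast

lemma con2: assumes "x \<in> S" "y \<in> S" "t x = s y" "s (m x y) = m x y" shows "s y = y"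
proof -
  have sx: "s x = x" using con1 assms by blast
  hence "t x = x" using id_t assms by blast
  hence "x = s y" using assms by simp
  hence "m x y = y" using assms by (metis lid)
  thus ?thesis using assms by simp
qed

definition push :: "'a \<Rightarrow> 'a list \<Rightarrow> 'a list" where
  "push x r = (if s x = x then r else (case r of [] \<Rightarrow> [x]
      | y # r' \<Rightarrow> (if t x = s y then m x y # r' else x # r)))"

definition red :: "'a list \<Rightarrow> 'a list" where "red w = foldr push w []"

lemma red_Nil[simp]: "red [] = []" by (simp add: red_def)
lemma red_Cons[simp]: "red (x # w) = push x (red w)" by (simp add: red_def)
lemma red_single: "red [d] = (if s d = d then [] else [d])" by (simp add: push_def)

lemma push_S: "x \<in> S \<Longrightarrow> set r \<subseteq> S \<Longrightarrow> set (push x r) \<subseteq> S"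
  by (auto simp: push_def mS split: list.splits)

lemma red_S: "set u \<subseteq> S \<Longrightarrow> set (red u) \<subseteq> S"
  by (induction u) (simp_all add: push_S)

lemma push_id: "s x = x \<Longrightarrow> push x r = r" by (simp add: push_def)

lemma push_push:
  assumes x: "x \<in> S" and y: "y \<in> S" and xy: "t x = s y" and r: "set r \<subseteq> S"
  shows "push x (push y r) = push (m x y) r"
proof (cases "s y = y")
  case True
  hence "m x y = x" using xy x by (metis rid)
  thus ?thesis using True by (simp add: push_id)
next
  case ny: False
  show ?thesis
  proof (cases "s x = x")
    case True
    hence "x = s y" using id_t x xy by metis
    hence "m x y = y" using y by simp
    thus ?thesis using True by (simp add: push_id)
  next
    case nx: False
    have nxy: "s (m x y) \<noteq> m x y" using con1 x y xy nx by blast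
    show ?thesis
    proof (cases r)
      case Nil
      then show ?thesis using nx ny nxy xy by (simp add: push_def)
    next
      case (Cons z r')
      have z: "z \<in> S" using r Cons by auto
      show ?thesis
      proof (cases "t y = s z")
        case True
        have "s (m y z) = s y" using y z True by simp
        moreover have "s (m x y) \<noteq> m x y" by (fact nxy)
        moreover have "t (m x y) = s z" using x y xy True by simp
        ultimately show ?thesis using Cons nx ny True xy assoc[OF x y z xy True]
          by (simp add: push_def)
      next
        case False
        have "t (m x y) \<noteq> s z" using x y xy False by simp
        then show ?thesis using Cons nx ny nxy False xy by (simp add: push_def)
      qed
    qed
  qed
qed

lemma push_foldr:
  assumes x: "x \<in> S" and p: "set p \<subseteq> S" and r: "set r \<subseteq> S"
  shows "push x (foldr push p r) = foldr push (push x p) r"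
proof (cases p)
  case Nil
  then show ?thesis by (simp add: push_def)
next
  case (Cons y p')
  have y: "y \<in> S" and p': "set p' \<subseteq> S" using p Cons by auto
  have fr: "set (foldr push p' r) \<subseteq> S"
    using p' r by (induction p') (simp_all add: push_S)
  show ?thesis
  proof (cases "s x = x")
    case True then show ?thesis by (simp add: push_id)
  next
    case False
    show ?thesis
    proof (cases "t x = s y")
      case True
      then show ?thesis using Cons False push_push[OF x y True fr] by (simp add: push_def)
    next
      case F2: False
      then show ?thesis using Cons False by (simp add: push_def)
    qed
  qed
qed

lemma red_append: "set u \<subseteq> S \<Longrightarrow> set w \<subseteq> S \<Longrightarrow> red (u @ w) = foldr push (red u) (red w)"
proof (induction u)
  case Nil then show ?case by (simp add: red_def)
next
  case (Cons x u)
  then show ?case using push_foldr[of x "red u" "red w"] red_S by auto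
qed


lemma umon_eq_S: "umon_eq S s t m u v \<Longrightarrow> set u \<subseteq> S \<and> set v \<subseteq> S"
  by (induction rule: umon_eq.induct) (auto intro: mS simp: Ids_def)

lemma umon_eq_red: "umon_eq S s t m u v \<Longrightarrow> red u = red v"
proof (induction rule: umon_eq.induct)
  case (ident u v e)
  have e: "e \<in> S" "s e = e" using ident by (auto simp: Ids_def)
  have "red (u @ [e] @ v) = foldr push (red u) (red ([e] @ v))"
    using ident e by (intro red_append) auto
  also have "red ([e] @ v) = red v" using e by (simp add: push_id)
  also have "foldr push (red u) (red v) = red (u @ v)" using ident by (simp add: red_append)
  finally show ?case .
next
  case (mult u v x y)
  have "red (u @ [x, y] @ v) = foldr push (red u) (red ([x, y] @ v))"
    using mult by (intro red_append) auto
  also have "red ([x, y] @ v) = red ([m x y] @ v)"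
    using mult push_push red_S by simp
  also have "foldr push (red u) (red ([m x y] @ v)) = red (u @ [m x y] @ v)"
    using mult mS by (subst red_append) auto
  finally show ?case .
qed auto

lemma cong_left: "umon_eq S s t m u v \<Longrightarrow> set w \<subseteq> S \<Longrightarrow> umon_eq S s t m (w @ u) (w @ v)"
proof (induction rule: umon_eq.induct)
  case (refl w') then show ?case by (intro umon_eq.refl) auto
next
  case (sym u v) then show ?case by (blast intro: umon_eq.sym)
next
  case (trans u v w') then show ?case by (blast intro: umon_eq.trans)
next
  case (ident u v e)
  then show ?case using umon_eq.ident[of "w @ u" S v e s t m] by auto
next
  case (mult u v x y)
  then show ?case using umon_eq.mult[of "w @ u" S v x y t s m] by auto
qed

lemma cong_right: "umon_eq S s t m u v \<Longrightarrow> set w \<subseteq> S \<Longrightarrow> umon_eq S s t m (u @ w) (v @ w)"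
proof (induction rule: umon_eq.induct)
  case (refl w') then show ?case by (intro umon_eq.refl) auto
next
  case (sym u v) then show ?case by (blast intro: umon_eq.sym)
next
  case (trans u v w') then show ?case by (blast intro: umon_eq.trans)
next
  case (ident u v e)
  then show ?case using umon_eq.ident[of u S "v @ w" e s t m] by auto
next
  case (mult u v x y)
  then show ?case using umon_eq.mult[of u S "v @ w" x y t s m] by auto
qed

lemma umon_eq_push: assumes x: "x \<in> S" and r: "set r \<subseteq> S"
  shows "umon_eq S s t m (x # r) (push x r)"
proof (cases "s x = x")
  case True
  then show ?thesis using umon_eq.ident[of "[]" S r x s t m] x r by (auto simp: Ids_def push_def)
next
  case False
  show ?thesis
  proof (cases r)
    case Nil
    then show ?thesis using False x by (auto simp: push_def intro: umon_eq.refl)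
  next
    case (Cons y r')
    show ?thesis
    proof (cases "t x = s y")
      case True
      then show ?thesis using umon_eq.mult[of "[]" S r' x y t s m] x r Cons False
        by (auto simp: push_def)
    next
      case F2: False
      then show ?thesis using x r Cons False umon_eq.refl[of "x # r" S s t m] by (auto simp: push_def)
    qed
  qed
qed

lemma umon_eq_red': "set u \<subseteq> S \<Longrightarrow> umon_eq S s t m u (red u)"
proof (induction u)
  case Nil then show ?case by (auto intro: umon_eq.refl)
next
  case (Cons x u)
  have "umon_eq S s t m ([x] @ u) ([x] @ red u)" using Cons by (intro cong_left) auto
  moreover have "umon_eq S s t m (x # red u) (push x (red u))"
    using Cons red_S by (intro umon_eq_push) auto
  ultimately show ?case by (auto intro: umon_eq.trans)
qed

fun reduced :: "'a list \<Rightarrow> bool" where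
  "reduced [] = True"
| "reduced [x] = (x \<in> S \<and> s x \<noteq> x)"
| "reduced (x # y # r) = (x \<in> S \<and> s x \<noteq> x \<and> t x \<noteq> s y \<and> reduced (y # r))"

lemma reduced_hd: "reduced (y # r) \<Longrightarrow> y \<in> S \<and> s y \<noteq> y"
  by (cases r) auto

lemma push_reduced: assumes x: "x \<in> S" and r: "reduced r" shows "reduced (push x r)"
proof (cases "s x = x")
  case True then show ?thesis using r by (simp add: push_id)
next
  case nx: False
  show ?thesis
  proof (cases r)
    case Nil then show ?thesis using x nx by (simp add: push_def)
  next
    case (Cons y r')
    have y: "y \<in> S" "s y \<noteq> y" using reduced_hd r Cons by auto
    show ?thesis
    proof (cases "t x = s y")
      case True
      have nxy: "s (m x y) \<noteq> m x y" using con1 x y True nx by blast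
      have mxy: "m x y \<in> S" using mS x y True by blast
      show ?thesis
      proof (cases r')
        case Nil then show ?thesis using Cons True nx nxy mxy by (simp add: push_def)
      next
        case (Cons z r'')
        then show ?thesis using \<open>r = y # r'\<close> True nx nxy mxy r x y by (simp add: push_def)
      qed
    next
      case False
      then show ?thesis using Cons nx x r by (simp add: push_def)
    qed
  qed
qed

lemma red_reduced: "set u \<subseteq> S \<Longrightarrow> reduced (red u)"
  by (induction u) (auto intro: push_reduced)

lemma foldr_len: "reduced (x # p) \<Longrightarrow> set q \<subseteq> S \<Longrightarrow>
   \<exists>y rest. foldr push (x # p) q = y # rest \<and> s y = s x \<and> length p \<le> length rest"
proof (induction p arbitrary: x)
  case Nil
  have x: "x \<in> S" "s x \<noteq> x" using Nil by auto
  show ?case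
  proof (cases q)
    case Nil then show ?thesis using x by (simp add: push_def)
  next
    case (Cons z q')
    have "z \<in> S" using Nil.prems Cons by auto
    then show ?thesis using x Cons by (auto simp: push_def)
  qed
next
  case (Cons x2 p')
  have r2: "reduced (x2 # p')" and x: "x \<in> S" "s x \<noteq> x" "t x \<noteq> s x2" using Cons.prems by auto
  obtain y rest where yr: "foldr push (x2 # p') q = y # rest" "s y = s x2" "length p' \<le> length rest"
    using Cons.IH[OF r2 Cons.prems(2)] by blast
  have "foldr push (x # x2 # p') q = push x (y # rest)" using yr by simp
  also have "\<dots> = x # y # rest" using x yr by (simp add: push_def)
  finally show ?case using yr by auto
qed

lemma keyK:
  assumes d: "set d \<subseteq> S" and w: "set w \<subseteq> S" and r: "red (d @ w) = r" and len: "length r \<le> 1"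
  shows "red d = [] \<or> (\<exists>x y. red d = [x] \<and> r = [y] \<and> x \<in> S \<and> s x \<noteq> x \<and> cat_leq S s t m x y)"
proof (cases "red d")
  case Nil then show ?thesis by simp
next
  case (Cons x p')
  have rd: "reduced (x # p')" using red_reduced[OF d] Cons by simp
  have q: "set (red w) \<subseteq> S" using red_S w by blast
  have eq: "foldr push (x # p') (red w) = r" using r red_append[OF d w] Cons by simp
  obtain y rest where yr: "foldr push (x # p') (red w) = y # rest" "length p' \<le> length rest"
    using foldr_len[OF rd q] by blast
  have "length (y # rest) \<le> 1" using yr(1) eq len by simp
  hence "rest = []" by simp
  hence p': "p' = []" using yr by auto
  have x: "x \<in> S" "s x \<noteq> x" using rd p' by auto
  have px: "push x (red w) = r" using eq p' by simp
  show ?thesis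
  proof (cases "red w")
    case Nil
    have "cat_leq S s t m x x" unfolding cat_leq_def using x tS by (intro bexI[of _ "t x"]) auto
    then show ?thesis using px Nil Cons p' x by (auto simp: push_def)
  next
    case (Cons z q')
    have z: "z \<in> S" using q Cons by auto
    show ?thesis
    proof (cases "t x = s z")
      case True
      have "r = m x z # q'" using px Cons True x by (simp add: push_def)
      hence "q' = []" "r = [m x z]" using len by auto
      moreover have "cat_leq S s t m x (m x z)" unfolding cat_leq_def using z True by blast
      ultimately show ?thesis using \<open>red d = x # p'\<close> p' x by auto
    next
      case False
      have "r = x # z # q'" using px Cons False x by (simp add: push_def)
      then show ?thesis using len by simp
    qed
  qed
qed


lemma H1: "cat_leq S s t m x y \<Longrightarrow> x \<in> S \<Longrightarrow> umon_leq S s t m [x] [y]"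
proof -
  assume "cat_leq S s t m x y" "x \<in> S"
  then obtain z where z: "z \<in> S" "t x = s z" "m x z = y" unfolding cat_leq_def by blast
  have "umon_eq S s t m ([] @ [x, z] @ []) ([] @ [m x z] @ [])"
    using \<open>x \<in> S\<close> z by (intro umon_eq.mult) auto
  then show ?thesis unfolding umon_leq_def using z by (intro exI[of _ "[z]"]) auto
qed

lemma H2: "set u \<subseteq> S \<Longrightarrow> umon_leq S s t m [] u"
  unfolding umon_leq_def by (auto intro: umon_eq.refl)

lemma H3: "umon_eq S s t m d d' \<Longrightarrow> umon_leq S s t m d' c \<Longrightarrow> umon_leq S s t m d c"
  unfolding umon_leq_def by (meson cong_right umon_eq.trans)

lemma H4: "umon_leq S s t m d c \<Longrightarrow> umon_eq S s t m c c' \<Longrightarrow> umon_leq S s t m d c'"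
  unfolding umon_leq_def by (meson umon_eq.trans)

lemma H5: assumes d: "set d \<subseteq> S" and le: "umon_leq S s t m d [a]" and a: "a \<in> S"
  shows "red d = [] \<or> (\<exists>x. red d = [x] \<and> x \<in> S \<and> s x \<noteq> x \<and> cat_leq S s t m x a)"
proof -
  obtain w where w: "set w \<subseteq> S" "umon_eq S s t m (d @ w) [a]" using le unfolding umon_leq_def by blast
  have r: "red (d @ w) = red [a]" using umon_eq_red[OF w(2)] .
  have "length (red [a]) \<le> 1" by (simp add: push_def)
  from keyK[OF d w(1) r this] show ?thesis
    by (auto simp: push_def split: if_splits)
qed

lemma H6: assumes d: "d \<in> S" and le: "umon_leq S s t m [d] []" shows "s d = d"
proof -
  obtain w where w: "set w \<subseteq> S" "umon_eq S s t m ([d] @ w) []" using le unfolding umon_leq_def by blast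
  have r: "red ([d] @ w) = []" using umon_eq_red[OF w(2)] by simp
  from keyK[OF _ w(1) r] d show ?thesis by (auto simp: push_def split: if_splits)
qed

lemma idle: "cat_leq S s t m d a \<Longrightarrow> d \<in> S \<Longrightarrow> s d = d \<Longrightarrow> d = s a"
  unfolding cat_leq_def by force

lemma leq_src: "cat_leq S s t m x a \<Longrightarrow> x \<in> S \<Longrightarrow> s x = s a"
  unfolding cat_leq_def by force

lemma leq_s: "x \<in> S \<Longrightarrow> cat_leq S s t m (s x) x"
  unfolding cat_leq_def by force

lemma lgcd_left:
  assumes a: "a \<in> S" and b: "b \<in> S" and sab: "s a = s b"
  shows "((\<exists>c. umon_lgcd S s t m [a] [b] c) \<longleftrightarrow> (\<exists>c. cat_lgcd S s t m a b c)) \<and>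
         (\<forall>c. cat_lgcd S s t m a b c \<longrightarrow> umon_lgcd S s t m [a] [b] [c])"
proof -
  have part1: "umon_lgcd S s t m [a] [b] [c]" if g: "cat_lgcd S s t m a b c" for c
  proof -
    have c: "c \<in> S" "cat_leq S s t m c a" "cat_leq S s t m c b"
      and gr: "\<And>d. d \<in> S \<Longrightarrow> cat_leq S s t m d a \<Longrightarrow> cat_leq S s t m d b \<Longrightarrow> cat_leq S s t m d c"
      using g unfolding cat_lgcd_def by auto
    have "umon_leq S s t m d [c]"
      if d: "set d \<subseteq> S" "umon_leq S s t m d [a]" "umon_leq S s t m d [b]" for d
    proof -
      have ed: "umon_eq S s t m d (red d)" using umon_eq_red' d by blast
      from H5[OF d(1) d(2) a] show ?thesis
      proof
        assume "red d = []"
        then show ?thesis using ed H2[of "[c]"] c H3 by auto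
      next
        assume "\<exists>x. red d = [x] \<and> x \<in> S \<and> s x \<noteq> x \<and> cat_leq S s t m x a"
        then obtain x where x: "red d = [x]" "x \<in> S" "cat_leq S s t m x a" by blast
        from H5[OF d(1) d(3) b] x have "cat_leq S s t m x b" by auto
        hence "cat_leq S s t m x c" using gr x by blast
        hence "umon_leq S s t m [x] [c]" using H1 x by blast
        then show ?thesis using ed x H3 by auto
      qed
    qed
    then show ?thesis unfolding umon_lgcd_def using c H1 by auto
  qed
  have part2: "\<exists>c'. cat_lgcd S s t m a b c'" if g: "umon_lgcd S s t m [a] [b] c" for c
  proof -
    have c: "set c \<subseteq> S" "umon_leq S s t m c [a]" "umon_leq S s t m c [b]"
      and gr: "\<And>d. set d \<subseteq> S \<Longrightarrow> umon_leq S s t m d [a] \<Longrightarrow> umon_leq S s t m d [b] \<Longrightarrow> umon_leq S s t m d c"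
      using g unfolding umon_lgcd_def by auto
    have ec: "umon_eq S s t m c (red c)" using umon_eq_red' c by blast
    have dc: "umon_leq S s t m [d] (red c)" if d: "d \<in> S" "cat_leq S s t m d a" "cat_leq S s t m d b" for d
      using gr[of "[d]"] H1 d H4 ec by auto
    from H5[OF c(1) c(2) a] show ?thesis
    proof
      assume rc: "red c = []"
      have "cat_lgcd S s t m a b (s a)"
        unfolding cat_lgcd_def
      proof (intro conjI ballI impI)
        show "s a \<in> S" using sS a by blast
        show "cat_leq S s t m (s a) a" using leq_s a by blast
        show "cat_leq S s t m (s a) b" using leq_s b sab by simp
        fix d assume "d \<in> S" "cat_leq S s t m d a \<and> cat_leq S s t m d b"
        hence "umon_leq S s t m [d] []" and d: "d \<in> S" "cat_leq S s t m d a" using dc rc by auto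
        hence "s d = d" using H6 by blast
        hence "d = s a" using idle d by blast
        then show "cat_leq S s t m d (s a)" using leq_s[of "s a"] a sS by simp
      qed
      then show ?thesis by blast
    next
      assume "\<exists>x. red c = [x] \<and> x \<in> S \<and> s x \<noteq> x \<and> cat_leq S s t m x a"
      then obtain x where x: "red c = [x]" "x \<in> S" "cat_leq S s t m x a" by blast
      from H5[OF c(1) c(3) b] x have xb: "cat_leq S s t m x b" by auto
      have "cat_lgcd S s t m a b x"
        unfolding cat_lgcd_def
      proof (intro conjI ballI impI)
        show "x \<in> S" "cat_leq S s t m x a" "cat_leq S s t m x b" using x xb by auto
        fix d assume "d \<in> S" "cat_leq S s t m d a \<and> cat_leq S s t m d b"
        hence le: "umon_leq S s t m [d] [x]" and d: "d \<in> S" "cat_leq S s t m d a" using dc x by auto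
        have "s x = s a" using leq_src x by blast
        hence "s d = d \<Longrightarrow> cat_leq S s t m d x" using idle d leq_s x by metis
        with H5[OF _ le x(2)] d show "cat_leq S s t m d x"
          by (auto simp: push_def split: if_splits)
      qed
      then show ?thesis by blast
    qed
  qed
  show ?thesis using part1 part2 by blast
qed


lemma dual_cc: "cc S t s (\<lambda>x y. m y x)"
proof
  show "category S t s (\<lambda>x y. m y x)"
    unfolding category_def using sS tS mS assoc by auto
  show "conical S t s (\<lambda>x y. m y x)"
    unfolding conical_def Ids_def
  proof (intro ballI impI)
    fix x y assume xy: "x \<in> S" "y \<in> S" "s x = t y" "m y x \<in> {e \<in> S. t e = e}"
    hence "s (m y x) = m y x" using id_s by auto
    hence "s x = x" using con2[of y x] xy by auto
    thus "x \<in> {e \<in> S. t e = e}" using xy id_t by auto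
  qed
qed

lemma umon_eq_dual: "umon_eq S s t m u v \<Longrightarrow> umon_eq S t s (\<lambda>x y. m y x) (rev u) (rev v)"
proof (induction rule: umon_eq.induct)
  case (refl w) then show ?case by (intro umon_eq.refl) auto
next
  case (sym u v) then show ?case by (blast intro: umon_eq.sym)
next
  case (trans u v w) then show ?case by (blast intro: umon_eq.trans)
next
  case (ident u v e)
  have "e \<in> Ids S t" using ident id_t by (auto simp: Ids_def)
  then show ?case using umon_eq.ident[of "rev v" S "rev u" e t s "\<lambda>x y. m y x"] ident by auto
next
  case (mult u v x y)
  then show ?case using umon_eq.mult[of "rev v" S "rev u" y x s t "\<lambda>x y. m y x"] by auto
qed

end

lemma umon_eq_dual_iff: "cc S s t m \<Longrightarrow>
  umon_eq S t s (\<lambda>x y. m y x) (rev u) (rev v) \<longleftrightarrow> umon_eq S s t m u v"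
proof
  assume C: "cc S s t m"
  show "umon_eq S t s (\<lambda>x y. m y x) (rev u) (rev v) \<Longrightarrow> umon_eq S s t m u v"
    using cc.umon_eq_dual[OF cc.dual_cc[OF C], of "rev u" "rev v"] by simp
  show "umon_eq S s t m u v \<Longrightarrow> umon_eq S t s (\<lambda>x y. m y x) (rev u) (rev v)"
    using cc.umon_eq_dual[OF C] by blast
qed

lemma rleq_dual: assumes "cc S s t m"
  shows "umon_rleq S s t m u v \<longleftrightarrow> umon_leq S t s (\<lambda>x y. m y x) (rev u) (rev v)"
proof
  assume "umon_rleq S s t m u v"
  then obtain w where "set w \<subseteq> S" "umon_eq S s t m (w @ u) v" unfolding umon_rleq_def by blast
  then show "umon_leq S t s (\<lambda>x y. m y x) (rev u) (rev v)" unfolding umon_leq_def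
    using umon_eq_dual_iff[OF assms, of "w @ u" v] by (intro exI[of _ "rev w"]) auto
next
  assume "umon_leq S t s (\<lambda>x y. m y x) (rev u) (rev v)"
  then obtain w where "set w \<subseteq> S" "umon_eq S t s (\<lambda>x y. m y x) (rev u @ w) (rev v)" unfolding umon_leq_def by blast
  then show "umon_rleq S s t m u v" unfolding umon_rleq_def
    using umon_eq_dual_iff[OF assms, of "rev w @ u" v] by (intro exI[of _ "rev w"]) auto
qed

lemma rgcd_dual: assumes "cc S s t m"
  shows "umon_rgcd S s t m u v c \<longleftrightarrow> umon_lgcd S t s (\<lambda>x y. m y x) (rev u) (rev v) (rev c)"
proof -
  have A: "(\<forall>d. set d \<subseteq> S \<and> umon_rleq S s t m d u \<and> umon_rleq S s t m d v \<longrightarrow> umon_rleq S s t m d c)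
    \<longleftrightarrow> (\<forall>d. set d \<subseteq> S \<and> umon_leq S t s (\<lambda>x y. m y x) d (rev u) \<and> umon_leq S t s (\<lambda>x y. m y x) d (rev v)
          \<longrightarrow> umon_leq S t s (\<lambda>x y. m y x) d (rev c))"
  proof
    assume H: "\<forall>d. set d \<subseteq> S \<and> umon_rleq S s t m d u \<and> umon_rleq S s t m d v \<longrightarrow> umon_rleq S s t m d c"
    show "\<forall>d. set d \<subseteq> S \<and> umon_leq S t s (\<lambda>x y. m y x) d (rev u) \<and> umon_leq S t s (\<lambda>x y. m y x) d (rev v)
          \<longrightarrow> umon_leq S t s (\<lambda>x y. m y x) d (rev c)"
    proof (intro allI impI)
      fix d assume "set d \<subseteq> S \<and> umon_leq S t s (\<lambda>x y. m y x) d (rev u) \<and> umon_leq S t s (\<lambda>x y. m y x) d (rev v)"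
      then show "umon_leq S t s (\<lambda>x y. m y x) d (rev c)"
        using H[rule_format, of "rev d"] rleq_dual[OF assms] by fastforce
    qed
  next
    assume H: "\<forall>d. set d \<subseteq> S \<and> umon_leq S t s (\<lambda>x y. m y x) d (rev u) \<and> umon_leq S t s (\<lambda>x y. m y x) d (rev v)
          \<longrightarrow> umon_leq S t s (\<lambda>x y. m y x) d (rev c)"
    show "\<forall>d. set d \<subseteq> S \<and> umon_rleq S s t m d u \<and> umon_rleq S s t m d v \<longrightarrow> umon_rleq S s t m d c"
      using H rleq_dual[OF assms] by auto
  qed
  show ?thesis unfolding umon_rgcd_def umon_lgcd_def using A rleq_dual[OF assms] by auto
qed

lemma cat_rgcd_dual: "cat_rgcd S s t m a b c \<longleftrightarrow> cat_lgcd S t s (\<lambda>x y. m y x) a b c"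
  unfolding cat_rgcd_def cat_lgcd_def cat_rleq_def cat_leq_def by (auto simp: eq_commute)

theorem corollary5p7:
  assumes cat: "category S s t m" and con: "conical S s t m"
    and a: "a \<in> S" and b: "b \<in> S"
  shows "(left_cancellative S s t m \<and> s a = s b \<longrightarrow>
            ((\<exists>c. umon_lgcd S s t m [a] [b] c) \<longleftrightarrow> (\<exists>c. cat_lgcd S s t m a b c)) \<and>
            (\<forall>c. cat_lgcd S s t m a b c \<longrightarrow> umon_lgcd S s t m [a] [b] [c]))
       \<and> (right_cancellative S s t m \<and> t a = t b \<longrightarrow>
            ((\<exists>c. umon_rgcd S s t m [a] [b] c) \<longleftrightarrow> (\<exists>c. cat_rgcd S s t m a b c)) \<and>
            (\<forall>c. cat_rgcd S s t m a b c \<longrightarrow> umon_rgcd S s t m [a] [b] [c]))"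
proof -
  have C: "cc S s t m" using cat con by (simp add: cc_def)
  have P1: "left_cancellative S s t m \<and> s a = s b \<longrightarrow>
            ((\<exists>c. umon_lgcd S s t m [a] [b] c) \<longleftrightarrow> (\<exists>c. cat_lgcd S s t m a b c)) \<and>
            (\<forall>c. cat_lgcd S s t m a b c \<longrightarrow> umon_lgcd S s t m [a] [b] [c])"
    using cc.lgcd_left[OF C a b] by blast
  have P2: "right_cancellative S s t m \<and> t a = t b \<longrightarrow>
            ((\<exists>c. umon_rgcd S s t m [a] [b] c) \<longleftrightarrow> (\<exists>c. cat_rgcd S s t m a b c)) \<and>
            (\<forall>c. cat_rgcd S s t m a b c \<longrightarrow> umon_rgcd S s t m [a] [b] [c])"
  proof
    assume "right_cancellative S s t m \<and> t a = t b"
    hence tab: "t a = t b" by blast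
    note D = cc.lgcd_left[OF cc.dual_cc[OF C] a b tab]
    have E: "(\<exists>c. umon_rgcd S s t m [a] [b] c) \<longleftrightarrow> (\<exists>c. umon_lgcd S t s (\<lambda>x y. m y x) [a] [b] c)"
      using rgcd_dual[OF C] by (metis rev_rev_ident rev_singleton_conv)
    show "((\<exists>c. umon_rgcd S s t m [a] [b] c) \<longleftrightarrow> (\<exists>c. cat_rgcd S s t m a b c)) \<and>
            (\<forall>c. cat_rgcd S s t m a b c \<longrightarrow> umon_rgcd S s t m [a] [b] [c])"
    proof
      show "(\<exists>c. umon_rgcd S s t m [a] [b] c) \<longleftrightarrow> (\<exists>c. cat_rgcd S s t m a b c)"
        using D E cat_rgcd_dual[of S s t m a b] by blast
      show "\<forall>c. cat_rgcd S s t m a b c \<longrightarrow> umon_rgcd S s t m [a] [b] [c]"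
        using D cat_rgcd_dual[of S s t m a b] rgcd_dual[OF C, of "[a]" "[b]"] by simp
    qed
  qed
  show ?thesis using P1 P2 by blast
qed

end
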